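(* Let $n\geq 3$, $y_1,\dots,y_n\in\mathbb{R}$, and let $r\in\{2,\dots,n\}$. Then $$-(n-2)y_1^2-(n-1)\sum_{\substack{1\leq i\leq n\\ i\neq 1,r}}y_i^2+(n-2)\sum_{i=2}^n y_1y_i+(n-1)\sum_{2\leq i<j\leq n}y_iy_j\leq \frac{(3n-1)(n-2)}{2(3n+5)}\Big(\sum_{i=1}^n y_i\Big)^2,$$ with equality if and only if $y_i=\frac32 y_1$ for all $i\in\{2,\dots,n\}\setminus\{r\}$ and $y_r=\frac92 y_1$. *)

theory Defs
  imports Complex_Main
begin

end

theory Submission
  imports Defs
begin

lemma pairset_fin: "finite {(i::nat, j). 2 \<le> i \<and> i < j \<and> j \<le> m}"
  by (rule finite_subset[of _ "{0..m} \<times> {0..m}"]) auto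

lemma pair_sum:
  fixes y :: "nat \<Rightarrow> real"
  shows "2 * (\<Sum>(i, j)\<in>{(i, j). 2 \<le> i \<and> i < j \<and> j \<le> m}. y i * y j)
     = (\<Sum>i=2..m. y i)^2 - (\<Sum>i=2..m. (y i)^2)"
proof (induction m)
  case 0
  have e: "{(i::nat, j). 2 \<le> i \<and> i < j \<and> j \<le> 0} = {}" by auto
  show ?case by (simp only: e sum.empty) simp
next
  case (Suc m)
  have S: "{(i, j). 2 \<le> i \<and> i < j \<and> j \<le> Suc m} =
     {(i, j). 2 \<le> i \<and> i < j \<and> j \<le> m} \<union> (\<lambda>i. (i, Suc m)) ` {2..m}" by auto
  have D: "{(i, j). 2 \<le> i \<and> i < j \<and> j \<le> m} \<inter> (\<lambda>i. (i, Suc m)) ` {2..m} = {}" by auto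
  have "(\<Sum>(i, j)\<in>{(i, j). 2 \<le> i \<and> i < j \<and> j \<le> Suc m}. y i * y j)
     = (\<Sum>(i, j)\<in>{(i, j). 2 \<le> i \<and> i < j \<and> j \<le> m}. y i * y j)
       + (\<Sum>(i, j)\<in>(\<lambda>i. (i, Suc m)) ` {2..m}. y i * y j)"
    unfolding S by (rule sum.union_disjoint) (use pairset_fin D in auto)
  also have "(\<Sum>(i, j)\<in>(\<lambda>i. (i, Suc m)) ` {2..m}. y i * y j) = (\<Sum>i=2..m. y i * y (Suc m))"
    by (subst sum.reindex) (auto simp: inj_on_def)
  also have "\<dots> = (\<Sum>i=2..m. y i) * y (Suc m)" by (simp add: sum_distrib_right)
  finally have E: "(\<Sum>(i, j)\<in>{(i, j). 2 \<le> i \<and> i < j \<and> j \<le> Suc m}. y i * y j)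
     = (\<Sum>(i, j)\<in>{(i, j). 2 \<le> i \<and> i < j \<and> j \<le> m}. y i * y j) + (\<Sum>i=2..m. y i) * y (Suc m)" .
  show ?case
  proof (cases "m = 0")
    case True
    have e: "{(i::nat, j). 2 \<le> i \<and> i < j \<and> j \<le> Suc 0} = {}" by auto
    show ?thesis using True by (simp only: e sum.empty) simp
  next
    case False
    then have eq: "{2..Suc m} = insert (Suc m) {2..m}" by auto
    have s1: "(\<Sum>i=2..Suc m. y i) = y (Suc m) + (\<Sum>i=2..m. y i)"
      unfolding eq by (rule sum.insert) auto
    have s2: "(\<Sum>i=2..Suc m. (y i)^2) = (y (Suc m))^2 + (\<Sum>i=2..m. (y i)^2)"
      unfolding eq by (rule sum.insert) auto
    show ?thesis
      apply (simp only: s1 s2 E)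
      using Suc.IH by algebra
  qed
qed

lemma quadF1: "al*(a+(p + 9/2*a)+(q + 3*k/2*a))^2 - (-k*a^2 + k*a*(p + 9/2*a) + k*a*(q + 3*k/2*a) + (k+1)*(p + 9/2*a)*(q + 3*k/2*a) + g*(q + 3*k/2*a)^2)
  = al*(p+q)^2 - (k+1)*p*q - g*q^2" if h1: "al*(2*(3*k+11)) = k*(3*k+5)" and h2: "g*(2*k) = (k+1)*(k-3)" for al g k p q a :: real
  using h1 h2 by algebra

lemma quadF2: "(3*k+11)*(4*al*(al*(p+q)^2 - (k+1)*p*q - g*q^2)) = (3*k+11)*(2*al*p+(2*al-k-1)*q)^2 + 4*(k+1)*q^2" if h1: "al*(2*(3*k+11)) = k*(3*k+5)" and h2: "g*(2*k) = (k+1)*(k-3)" for al g k p q a :: real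
  using h1 h2 by algebra

lemma quad:
  fixes a b c k :: real
  assumes k: "k \<ge> 1"
  defines "F \<equiv> k*(3*k+5)/(2*(3*k+11))*(a+b+c)^2 - (-k*a^2 + k*a*b + k*a*c + (k+1)*b*c + (k+1)*(k-3)/(2*k)*c^2)"
  shows "F \<ge> 0 \<and> (F = 0 \<longleftrightarrow> b = 9/2*a \<and> c = 3*k/2*a)"
proof -
  define p where "p = b - 9/2*a"
  define q where "q = c - 3*k/2*a"
  define al where "al = k*(3*k+5)/(2*(3*k+11))"
  define g where "g = (k+1)*(k-3)/(2*k)"
  have h1: "al*(2*(3*k+11)) = k*(3*k+5)" unfolding al_def using k by simp
  have h2: "g*(2*k) = (k+1)*(k-3)" unfolding g_def using k by simp
  have al: "al > 0" using k unfolding al_def by (auto intro!: divide_pos_pos mult_pos_pos)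
  have b: "b = p + 9/2*a" and c: "c = q + 3*k/2*a" unfolding p_def q_def by auto
  have F1: "F = al*(p+q)^2 - (k+1)*p*q - g*q^2"
    unfolding F_def al_def[symmetric] g_def[symmetric] b c by (rule quadF1[OF h1 h2])
  have F2: "(3*k+11)*(4*al*F) = (3*k+11)*(2*al*p+(2*al-k-1)*q)^2 + 4*(k+1)*q^2"
    unfolding F1 by (rule quadF2[OF h1 h2])
  have pos: "3*k+11 > 0" "4*(k+1) > 0" using k by auto
  have "(3*k+11)*(4*al*F) \<ge> 0" unfolding F2 using pos by (intro add_nonneg_nonneg) auto
  then have "4*al*F \<ge> 0" using pos(1) by (simp add: zero_le_mult_iff)
  then have F0: "F \<ge> 0" using al by (simp add: zero_le_mult_iff)
  have "F = 0 \<longleftrightarrow> p = 0 \<and> q = 0"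
  proof
    assume "F = 0"
    then have e: "(3*k+11)*(2*al*p+(2*al-k-1)*q)^2 + 4*(k+1)*q^2 = 0" using F2 by simp
    have n1: "(3*k+11)*(2*al*p+(2*al-k-1)*q)^2 \<ge> 0" using pos by simp
    have n2: "4*(k+1)*q^2 \<ge> 0" using pos by simp
    have "4*(k+1)*q^2 = 0" using e n1 n2 by linarith
    then have q0: "q = 0" using pos by simp
    then have "(3*k+11)*(2*al*p)^2 = 0" using e by simp
    then have "p = 0" using pos al by simp
    with q0 show "p = 0 \<and> q = 0" by simp
  next
    assume "p = 0 \<and> q = 0" then show "F = 0" using F1 by simp
  qed
  then show ?thesis using F0 unfolding p_def q_def by auto
qed

lemma keyA: "al*(a+(b+c))^2 -
    (- k*a^2 - (k+1)*R + k*(a*(b+c)) + (k+1)*(((b+c)^2 - (b^2+R))/2))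
   = (al*(a+b+c)^2 - (-k*a^2 + k*a*b + k*a*c + (k+1)*b*c + g*c^2))
     + 3/2*(k+1)*(R - w)" if h3: "g*c^2 = (k+1)*(k-3)/2 * w" and h4: "w*k = c^2" for al a b c k R g w :: real
  using h3 h4 by algebra

lemma key:
  fixes a b c R k :: real
  assumes k: "k \<ge> 1"
  shows "(3*k+5)*k/(2*(3*k+11))*(a+(b+c))^2 -
    (- k*a^2 - (k+1)*R + k*(a*(b+c)) + (k+1)*(((b+c)^2 - (b^2+R))/2))
   = (k*(3*k+5)/(2*(3*k+11))*(a+b+c)^2 - (-k*a^2 + k*a*b + k*a*c + (k+1)*b*c + (k+1)*(k-3)/(2*k)*c^2))
     + 3/2*(k+1)*(R - c^2/k)"
proof -
  define al where "al = (3*k+5)*k/(2*(3*k+11))"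
  define g where "g = (k+1)*(k-3)/(2*k)"
  define w where "w = c^2/k"
  have e1: "k*(3*k+5)/(2*(3*k+11)) = al" unfolding al_def by simp
  have h3: "g*c^2 = (k+1)*(k-3)/2 * w" unfolding g_def w_def using k by simp
  have h4: "w*k = c^2" unfolding w_def using k by simp
  have "al*(a+(b+c))^2 -
    (- k*a^2 - (k+1)*R + k*(a*(b+c)) + (k+1)*(((b+c)^2 - (b^2+R))/2))
   = (al*(a+b+c)^2 - (-k*a^2 + k*a*b + k*a*c + (k+1)*b*c + g*c^2))
     + 3/2*(k+1)*(R - w)" by (rule keyA[OF h3 h4])
  then show ?thesis unfolding al_def g_def w_def e1 by simp
qed

theorem mainTheorem7:
  fixes n r :: nat and y :: "nat \<Rightarrow> real"
  assumes "n \<ge> 3" and "r \<in> {2..n}"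
  shows "(- real (n - 2) * (y 1)\<^sup>2
           - real (n - 1) * (\<Sum>i\<in>{1..n} - {1, r}. (y i)\<^sup>2)
           + real (n - 2) * (\<Sum>i=2..n. y 1 * y i)
           + real (n - 1) * (\<Sum>(i, j)\<in>{(i, j). 2 \<le> i \<and> i < j \<and> j \<le> n}. y i * y j)
         \<le> (real (3 * n - 1) * real (n - 2)) / (2 * real (3 * n + 5)) * (\<Sum>i=1..n. y i)\<^sup>2)
       \<and> ((- real (n - 2) * (y 1)\<^sup>2
           - real (n - 1) * (\<Sum>i\<in>{1..n} - {1, r}. (y i)\<^sup>2)
           + real (n - 2) * (\<Sum>i=2..n. y 1 * y i)
           + real (n - 1) * (\<Sum>(i, j)\<in>{(i, j). 2 \<le> i \<and> i < j \<and> j \<le> n}. y i * y j)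
         = (real (3 * n - 1) * real (n - 2)) / (2 * real (3 * n + 5)) * (\<Sum>i=1..n. y i)\<^sup>2)
         \<longleftrightarrow> ((\<forall>i\<in>{2..n} - {r}. y i = 3 / 2 * y 1) \<and> y r = 9 / 2 * y 1))"
proof -
  define A where "A = {2..n} - {r}"
  define k where "k = real (n - 2)"
  define a where "a = y 1"
  define b where "b = y r"
  define c where "c = (\<Sum>i\<in>A. y i)"
  define R where "R = (\<Sum>i\<in>A. (y i)^2)"
  define LH where "LH = - real (n - 2) * (y 1)\<^sup>2
           - real (n - 1) * (\<Sum>i\<in>{1..n} - {1, r}. (y i)\<^sup>2)
           + real (n - 2) * (\<Sum>i=2..n. y 1 * y i)
           + real (n - 1) * (\<Sum>(i, j)\<in>{(i, j). 2 \<le> i \<and> i < j \<and> j \<le> n}. y i * y j)"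
  define RH where "RH = (real (3 * n - 1) * real (n - 2)) / (2 * real (3 * n + 5)) * (\<Sum>i=1..n. y i)\<^sup>2"
  define F where "F = k*(3*k+5)/(2*(3*k+11))*(a+b+c)^2 - (-k*a^2 + k*a*b + k*a*c + (k+1)*b*c + (k+1)*(k-3)/(2*k)*c^2)"
  define V where "V = (\<Sum>i\<in>A. (y i - c/k)^2)"
  have k1: "k \<ge> 1" unfolding k_def using assms by simp
  have rA: "r \<notin> A" "finite A" unfolding A_def by auto
  have cardA: "card A = n - 2" unfolding A_def using assms by (simp add: card_Diff_singleton)
  have X1: "{1..n} - {1, r} = A" unfolding A_def using assms by auto
  have eq2: "{2..n} = insert r A" unfolding A_def using assms by auto
  have S2: "(\<Sum>i=2..n. f i) = f r + (\<Sum>i\<in>A. f i)" for f :: "nat \<Rightarrow> real"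
    unfolding eq2 using rA by simp
  have eq1: "{1..n} = insert 1 {2..n}" using assms by auto
  have S1: "(\<Sum>i=1..n. y i) = a + (b + c)" unfolding eq1 a_def b_def c_def by (simp add: S2)
  have Sy: "(\<Sum>i=2..n. y 1 * y i) = a*(b+c)"
    unfolding S2 a_def b_def c_def by (simp add: sum_distrib_left distrib_left)
  have P: "(\<Sum>(i, j)\<in>{(i, j). 2 \<le> i \<and> i < j \<and> j \<le> n}. y i * y j) = ((b+c)^2 - (b^2+R))/2"
    using pair_sum[of y n] unfolding S2 b_def c_def R_def by simp
  have n1: "real (n - 1) = k + 1" "real (3*n-1) = 3*k+5" "real (3*n+5) = 3*k+11"
    unfolding k_def using assms by auto
  have LHe: "LH = - k*a^2 - (k+1)*R + k*(a*(b+c)) + (k+1)*(((b+c)^2 - (b^2+R))/2)"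
    unfolding LH_def X1 Sy P n1 by (simp add: k_def a_def R_def)
  have RHe: "RH = (3*k+5)*k/(2*(3*k+11))*(a+(b+c))^2"
    unfolding RH_def S1 n1 by (simp add: k_def)
  have Ve: "V = R - c^2/k"
  proof -
    have "V = (\<Sum>i\<in>A. (y i)^2 - 2*(c/k)*y i + (c/k)^2)"
      unfolding V_def by (rule sum.cong) (auto simp: power2_eq_square algebra_simps)
    also have "\<dots> = R - 2*(c/k)*c + k*(c/k)^2"
      unfolding R_def c_def by (simp add: sum.distrib sum_subtractf sum_distrib_left cardA k_def)
    also have "\<dots> = R - c^2/k" using k1 by (simp add: field_simps power2_eq_square)
    finally show ?thesis .
  qed
  have D: "RH - LH = F + 3/2*(k+1)*V"
    unfolding LHe RHe F_def Ve by (rule key[OF k1])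
  have FQ: "F \<ge> 0 \<and> (F = 0 \<longleftrightarrow> b = 9/2*a \<and> c = 3*k/2*a)"
    unfolding F_def by (rule quad[OF k1])
  have V0: "V \<ge> 0" unfolding V_def by (simp add: sum_nonneg)
  have VQ: "V = 0 \<longleftrightarrow> (\<forall>i\<in>A. y i = c/k)"
    unfolding V_def using rA by (subst sum_nonneg_eq_0_iff) auto
  have kp: "3/2*(k+1) > 0" using k1 by simp
  have ineq: "LH \<le> RH" using D FQ V0 kp by (smt (verit) mult_nonneg_nonneg)
  have "LH = RH \<longleftrightarrow> F = 0 \<and> V = 0"
  proof
    assume "LH = RH"
    then have "F + 3/2*(k+1)*V = 0" using D by simp
    moreover have "3/2*(k+1)*V \<ge> 0" using V0 kp by simp
    ultimately have "F = 0" "3/2*(k+1)*V = 0" using FQ by linarith+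
    then show "F = 0 \<and> V = 0" using kp by simp
  next
    assume "F = 0 \<and> V = 0" then show "LH = RH" using D by simp
  qed
  also have "\<dots> \<longleftrightarrow> ((\<forall>i\<in>A. y i = 3 / 2 * a) \<and> b = 9 / 2 * a)"
  proof
    assume h: "F = 0 \<and> V = 0"
    then have "b = 9/2*a" "c = 3*k/2*a" using FQ by auto
    moreover have "\<forall>i\<in>A. y i = c/k" using h VQ by auto
    ultimately show "(\<forall>i\<in>A. y i = 3 / 2 * a) \<and> b = 9 / 2 * a" using k1 by auto
  next
    assume h: "(\<forall>i\<in>A. y i = 3 / 2 * a) \<and> b = 9 / 2 * a"
    then have "c = (\<Sum>i\<in>A. 3/2*a)" unfolding c_def by (intro sum.cong) auto
    then have c: "c = 3*k/2*a" using cardA by (simp add: k_def)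
    then have "F = 0" using FQ h by simp
    moreover have "c/k = 3/2*a" using c k1 by (simp add: field_simps)
    then have "\<forall>i\<in>A. y i = c/k" using h by metis
    ultimately show "F = 0 \<and> V = 0" using VQ by simp
  qed
  finally show ?thesis using ineq unfolding LH_def RH_def A_def a_def b_def by simp
qed

end
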